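(* Let $S=s_1,\ldots,s_n$ be a sequence of positive real numbers, let $\alpha>1$, $\gamma>0$, and let $k$ be a positive integer. Let $\beta>0$ and let $L=\ell_1,\ldots,\ell_n$ be an optimal level sequence for $\textsc{Exp}(\alpha,\beta)$. Define \[ \beta'=\frac{n}{\sum_{i=1}^n s_i\alpha^{\ell_i}}. \] Let $\beta^*$ be the optimal parameter of $\textsc{Exp}(\alpha)$ (i.e., $(L^*,\beta^* )$ is an optimal solution of $\textsc{Exp}(\alpha)$ for some $L^*$). Then either $\beta^*\le\min(\beta,\beta')$ or $\beta^*\ge\max(\beta,\beta')$.
   Context: A level sequence is $L=\ell_1,\ldots,\ell_n$ of integers with $0\le\ell_i\le k$; set $\ell_0=0$. The penalty is $\mathrm{pen}(x,y)=\max(y-x,0)\,\gamma\log n$; $p_{\exp}(s;\lambda)=\lambda e^{-\lambda s}$; $\mathrm{score}_{\exp}(L,S;\alpha,\beta,\gamma)=\sum_{i=1}^n\big[-\log p_{\exp}(s_i;\beta\alpha^{\ell_i})+\mathrm{pen}(\ell_{i-1},\ell_i)\big]$. Problem $\textsc{Exp}(\alpha,\beta)$: given $S,\alpha,\beta,\gamma,k$, find a level sequence $L$ minimizing $\mathrm{score}_{\exp}(L,S;\alpha,\beta,\gamma)$. Problem $\textsc{Exp}(\alpha)$: given $S,\alpha,\gamma,k$, find a level sequence $L$ and $\beta>0$ minimizing $\mathrm{score}_{\exp}(L,S;\alpha,\beta,\gamma)$. *)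

theory Defs
  imports Complex_Main
begin

text \<open>Sequences are indexed 1..n: S i, L i for i in {1..n}. The level before
position 1 is 0.\<close>

definition level_seq :: "nat \<Rightarrow> nat \<Rightarrow> (nat \<Rightarrow> nat) \<Rightarrow> bool" where
  "level_seq n k L \<longleftrightarrow> (\<forall>i\<in>{1..n}. L i \<le> k)"

definition prev_level :: "(nat \<Rightarrow> nat) \<Rightarrow> nat \<Rightarrow> nat" where
  "prev_level L i = (if i = 0 then 0 else L i)"

definition pen :: "nat \<Rightarrow> real \<Rightarrow> nat \<Rightarrow> nat \<Rightarrow> real" where
  "pen n \<gamma> x y = max (real y - real x) 0 * \<gamma> * ln (real n)"

definition p_exp :: "real \<Rightarrow> real \<Rightarrow> real" where
  "p_exp s lam = lam * exp (- lam * s)"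

definition score_exp ::
  "nat \<Rightarrow> (nat \<Rightarrow> nat) \<Rightarrow> (nat \<Rightarrow> real) \<Rightarrow> real \<Rightarrow> real \<Rightarrow> real \<Rightarrow> real" where
  "score_exp n L S \<alpha> \<beta> \<gamma> =
     (\<Sum>i=1..n. - ln (p_exp (S i) (\<beta> * \<alpha> ^ L i)) + pen n \<gamma> (prev_level L (i - 1)) (L i))"

definition opt_exp_ab ::
  "nat \<Rightarrow> (nat \<Rightarrow> real) \<Rightarrow> real \<Rightarrow> real \<Rightarrow> real \<Rightarrow> nat \<Rightarrow> (nat \<Rightarrow> nat) \<Rightarrow> bool" where
  "opt_exp_ab n S \<alpha> \<beta> \<gamma> k L \<longleftrightarrow> level_seq n k L \<and>
     (\<forall>L'. level_seq n k L' \<longrightarrow> score_exp n L S \<alpha> \<beta> \<gamma> \<le> score_exp n L' S \<alpha> \<beta> \<gamma>)"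

definition opt_exp_a ::
  "nat \<Rightarrow> (nat \<Rightarrow> real) \<Rightarrow> real \<Rightarrow> real \<Rightarrow> nat \<Rightarrow> (nat \<Rightarrow> nat) \<Rightarrow> real \<Rightarrow> bool" where
  "opt_exp_a n S \<alpha> \<gamma> k L \<beta> \<longleftrightarrow> level_seq n k L \<and> \<beta> > 0 \<and>
     (\<forall>L' \<beta>'. level_seq n k L' \<and> \<beta>' > 0 \<longrightarrow>
        score_exp n L S \<alpha> \<beta> \<gamma> \<le> score_exp n L' S \<alpha> \<beta>' \<gamma>)"

end

theory Submission
  imports Defs
begin

definition TT :: "nat \<Rightarrow> (nat \<Rightarrow> real) \<Rightarrow> real \<Rightarrow> (nat \<Rightarrow> nat) \<Rightarrow> real" where
  "TT n S \<alpha> L = (\<Sum>i=1..n. S i * \<alpha> ^ L i)"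

definition CC :: "nat \<Rightarrow> real \<Rightarrow> real \<Rightarrow> (nat \<Rightarrow> nat) \<Rightarrow> real" where
  "CC n \<alpha> \<gamma> L = (\<Sum>i=1..n. pen n \<gamma> (prev_level L (i - 1)) (L i) - real (L i) * ln \<alpha>)"

lemma score_formula:
  assumes "b > 0" "\<alpha> > 0"
  shows "score_exp n L S \<alpha> b \<gamma> = - real n * ln b + b * TT n S \<alpha> L + CC n \<alpha> \<gamma> L"
proof -
  have tm: "- ln (p_exp (S i) (b * \<alpha> ^ L i)) = - ln b + b * (S i * \<alpha> ^ L i) - real (L i) * ln \<alpha>" for i
  proof -
    have p: "b * \<alpha> ^ L i > 0" using assms by simp
    have "ln (p_exp (S i) (b * \<alpha> ^ L i)) = ln (b * \<alpha> ^ L i) + (- (b * \<alpha> ^ L i) * S i)"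
      unfolding p_exp_def using p by (simp add: ln_mult)
    also have "ln (b * \<alpha> ^ L i) = ln b + real (L i) * ln \<alpha>"
      using assms by (simp add: ln_mult ln_realpow)
    finally show ?thesis by (simp add: algebra_simps)
  qed
  show ?thesis
    unfolding score_exp_def TT_def CC_def tm
    by (simp add: sum.distrib sum_distrib_left sum_subtractf algebra_simps)
qed

lemma f_strict:
  assumes "T > 0" "b > 0" "b \<noteq> real n / T" "n \<ge> 1"
  shows "- real n * ln (real n / T) + (real n / T) * T < - real n * ln b + b * T"
proof -
  define x where "x = b * T / real n"
  have x0: "x > 0" using assms by (simp add: x_def)
  have x1: "x \<noteq> 1" using assms by (auto simp: x_def field_simps)
  have lx: "ln x < x - 1" using ln_le_minus_one[OF x0] ln_eq_minus_one[OF x0] x1 by fastforce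
  have xb: "x * (real n / T) = b" using assms by (simp add: x_def)
  have "ln b = ln x + ln (real n / T)"
    using assms x0 xb ln_mult[of x "real n / T"] by simp
  moreover have "(real n / T) * T = real n" using assms by simp
  moreover have "b * T = real n * x" using assms by (simp add: x_def)
  moreover have "real n * ln x < real n * (x - 1)" using lx assms by simp
  ultimately show ?thesis by (simp add: algebra_simps)
qed

theorem proposition10:
  fixes n k :: nat and S :: "nat \<Rightarrow> real" and \<alpha> \<beta> \<gamma> \<beta>s :: real
    and L Ls :: "nat \<Rightarrow> nat"
  assumes "n \<ge> 1"
    and "\<forall>i\<in>{1..n}. S i > 0"
    and "\<alpha> > 1" and "\<gamma> > 0" and "k \<ge> 1"
    and "\<beta> > 0"
    and "opt_exp_ab n S \<alpha> \<beta> \<gamma> k L"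
    and "opt_exp_a n S \<alpha> \<gamma> k Ls \<beta>s"
  shows "let \<beta>' = real n / (\<Sum>i=1..n. S i * \<alpha> ^ L i)
         in \<beta>s \<le> min \<beta> \<beta>' \<or> \<beta>s \<ge> max \<beta> \<beta>'"
proof -
  have a0: "\<alpha> > 0" using assms by simp
  have Tpos: "TT n S \<alpha> M > 0" for M
    unfolding TT_def using assms(1,2) a0
    by (intro sum_pos) auto
  have L: "level_seq n k L" and Lopt: "\<And>L'. level_seq n k L' \<Longrightarrow> score_exp n L S \<alpha> \<beta> \<gamma> \<le> score_exp n L' S \<alpha> \<beta> \<gamma>"
    using assms(7) unfolding opt_exp_ab_def by auto
  have Ls: "level_seq n k Ls" and bs: "\<beta>s > 0"
    and Lsopt: "\<And>L' b. level_seq n k L' \<Longrightarrow> b > 0 \<Longrightarrow> score_exp n Ls S \<alpha> \<beta>s \<gamma> \<le> score_exp n L' S \<alpha> b \<gamma>"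
    using assms(8) unfolding opt_exp_a_def by auto
  define TL where "TL = TT n S \<alpha> L"
  define TS where "TS = TT n S \<alpha> Ls"
  have TL0: "TL > 0" and TS0: "TS > 0" using Tpos by (auto simp: TL_def TS_def)
  have bsT: "\<beta>s = real n / TS"
  proof (rule ccontr)
    assume ne: "\<beta>s \<noteq> real n / TS"
    have "score_exp n Ls S \<alpha> \<beta>s \<gamma> \<le> score_exp n Ls S \<alpha> (real n / TS) \<gamma>"
      using Lsopt[OF Ls] TS0 assms(1) by simp
    moreover have "score_exp n Ls S \<alpha> (real n / TS) \<gamma> < score_exp n Ls S \<alpha> \<beta>s \<gamma>"
      using f_strict[OF TS0 bs ne assms(1)] TS0 assms(1) bs a0
      by (simp add: score_formula TS_def)
    ultimately show False by simp
  qed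
  have i1: "\<beta> * TL + CC n \<alpha> \<gamma> L \<le> \<beta> * TS + CC n \<alpha> \<gamma> Ls"
    using Lopt[OF Ls] assms(6) a0 by (simp add: score_formula TL_def TS_def)
  have i2: "\<beta>s * TS + CC n \<alpha> \<gamma> Ls \<le> \<beta>s * TL + CC n \<alpha> \<gamma> L"
    using Lsopt[OF L bs] bs a0 by (simp add: score_formula TL_def TS_def)
  have key: "(\<beta> - \<beta>s) * (TL - TS) \<le> 0" using i1 i2 by (simp add: algebra_simps)
  define b' where "b' = real n / TL"
  have nTS: "TS = real n / \<beta>s" using bsT TS0 bs by (simp add: field_simps)
  have nTL: "TL = real n / b'" using TL0 assms(1) by (simp add: b'_def field_simps)
  have b'0: "b' > 0" using TL0 assms(1) by (simp add: b'_def)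
  have "\<beta>s \<le> min \<beta> b' \<or> \<beta>s \<ge> max \<beta> b'"
  proof (rule ccontr)
    assume "\<not> ?thesis"
    then consider "\<beta> < \<beta>s" "\<beta>s < b'" | "b' < \<beta>s" "\<beta>s < \<beta>" by linarith
    then show False
    proof cases
      case 1
      have "TL < TS" unfolding nTL nTS using 1 bs assms(1)
        by (simp add: frac_less2)
      then have "(\<beta> - \<beta>s) * (TL - TS) > 0" using 1 by (simp add: mult_neg_neg)
      then show False using key by simp
    next
      case 2
      have "TS < TL" unfolding nTL nTS using 2 b'0 assms(1)
        by (simp add: frac_less2)
      then have "(\<beta> - \<beta>s) * (TL - TS) > 0" using 2 by simp
      then show False using key by simp
    qed
  qed
  then show ?thesis by (simp add: b'_def TL_def TT_def Let_def)
qed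

end
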